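(* Let $\langle E,\rightarrow\rangle$ be a computation, $b_1,b_2$ regular predicates and $b=\mathrm{reg}(b_1\vee b_2)$. The graph $S_{\max}(E)$ has the same set of consistent cuts as the slice of $\langle E,\rightarrow\rangle$ with respect to $b$.
   Context: A computation is a directed graph $\langle E, \rightarrow\rangle$ whose vertices (events) are partitioned among processes $p_1,\dots,p_n$; events on each process are totally ordered, each process has an initial event and a final event, the path relation contains Lamport's happened-before relation, and all initial (resp. final) events lie in one strongly connected component. $\top$ is the set of final events and $\mathrm{succ}(e)$ the successor of $e$ on its process. A vertex subset $C$ is a consistent cut if for every edge $(u,v)$, $v\in C$ implies $u\in C$. A predicate (evaluated on non-trivial consistent cuts) is regular if whenever consistent cuts $C_1,C_2$ satisfy it, so do $C_1\cap C_2$ and $C_1\cup C_2$. $\mathrm{reg}(c)$ is the strongest regular predicate implied by $c$. The slice with respect to a predicate $c$ is a directed graph on $E$ whose consistent cuts include every consistent cut satisfying $c$ and which has the fewest consistent cuts among all such graphs. $F_c(e)[i]$ is the earliest event on $p_i$ reachable from $e$ in the slice with respect to $c$. $F_{\max}(e)[i]$ is whichever of $F_{b_1}(e)[i]$, $F_{b_2}(e)[i]$ occurs later on $p_i$. $S_{\max}(E)$ is the directed graph on $E$ with edges from each $e\notin\top$ to $\mathrm{succ}(e)$ and from each $e$ to $F_{\max}(e)[i]$ for every $i$. *)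

theory Defs
  imports Main
begin

(* A computation: event set E, edge relation R (the graph), n processes
   indexed 0..<n, process i given by the list P i of its events in process
   order (hd = initial event, last = final event). *)

definition cuts :: "'e set \<Rightarrow> 'e rel \<Rightarrow> 'e set set" where
  "cuts V G = {C. C \<subseteq> V \<and> (\<forall>(u,v)\<in>G. v \<in> C \<longrightarrow> u \<in> C)}"

definition initials :: "nat \<Rightarrow> (nat \<Rightarrow> 'e list) \<Rightarrow> 'e set" where
  "initials n P = {hd (P i) | i. i < n}"

definition finals :: "nat \<Rightarrow> (nat \<Rightarrow> 'e list) \<Rightarrow> 'e set" where
  "finals n P = {last (P i) | i. i < n}"

definition computation :: "'e set \<Rightarrow> 'e rel \<Rightarrow> nat \<Rightarrow> (nat \<Rightarrow> 'e list) \<Rightarrow> bool" where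
  "computation E R n P \<longleftrightarrow>
     R \<subseteq> E \<times> E \<and>
     E = (\<Union>i<n. set (P i)) \<and>
     (\<forall>i<n. P i \<noteq> [] \<and> distinct (P i)) \<and>
     (\<forall>i<n. \<forall>j<n. i \<noteq> j \<longrightarrow> set (P i) \<inter> set (P j) = {}) \<and>
     (\<forall>i<n. \<forall>k l. k < l \<and> l < length (P i) \<longrightarrow> (P i ! k, P i ! l) \<in> R\<^sup>+) \<and>
     (\<forall>i<n. \<forall>j<n. (hd (P i), hd (P j)) \<in> R\<^sup>*) \<and>
     (\<forall>i<n. \<forall>j<n. (last (P i), last (P j)) \<in> R\<^sup>*)"

definition ntcc :: "'e set \<Rightarrow> 'e rel \<Rightarrow> nat \<Rightarrow> (nat \<Rightarrow> 'e list) \<Rightarrow> 'e set \<Rightarrow> bool" where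
  "ntcc E R n P C \<longleftrightarrow> C \<in> cuts E R \<and> initials n P \<subseteq> C \<and> C \<inter> finals n P = {}"

definition regular :: "'e set \<Rightarrow> 'e rel \<Rightarrow> nat \<Rightarrow> (nat \<Rightarrow> 'e list) \<Rightarrow> ('e set \<Rightarrow> bool) \<Rightarrow> bool" where
  "regular E R n P b \<longleftrightarrow>
     (\<forall>C1 C2. ntcc E R n P C1 \<and> ntcc E R n P C2 \<and> b C1 \<and> b C2
        \<longrightarrow> b (C1 \<inter> C2) \<and> b (C1 \<union> C2))"

definition reg :: "'e set \<Rightarrow> 'e rel \<Rightarrow> nat \<Rightarrow> (nat \<Rightarrow> 'e list) \<Rightarrow> ('e set \<Rightarrow> bool) \<Rightarrow> 'e set \<Rightarrow> bool" where
  "reg E R n P c C \<longleftrightarrow>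
     (\<forall>r. regular E R n P r \<and> (\<forall>D. ntcc E R n P D \<and> c D \<longrightarrow> r D) \<longrightarrow> r C)"

definition is_slice :: "'e set \<Rightarrow> 'e rel \<Rightarrow> nat \<Rightarrow> (nat \<Rightarrow> 'e list) \<Rightarrow> ('e set \<Rightarrow> bool) \<Rightarrow> 'e rel \<Rightarrow> bool" where
  "is_slice E R n P c G \<longleftrightarrow>
     G \<subseteq> E \<times> E \<and>
     {C. ntcc E R n P C \<and> c C} \<subseteq> cuts E G \<and>
     (\<forall>H. H \<subseteq> E \<times> E \<and> {C. ntcc E R n P C \<and> c C} \<subseteq> cuts E H
        \<longrightarrow> card (cuts E G) \<le> card (cuts E H))"

definition first_reach :: "'e rel \<Rightarrow> (nat \<Rightarrow> 'e list) \<Rightarrow> 'e \<Rightarrow> nat \<Rightarrow> nat" where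
  "first_reach G P e i = (LEAST k. k < length (P i) \<and> (e, P i ! k) \<in> G\<^sup>*)"

(* F_max(e)[i]: the later of F_{b1}(e)[i] and F_{b2}(e)[i], where G1, G2 are slices w.r.t. b1, b2 *)
definition Fmax :: "'e rel \<Rightarrow> 'e rel \<Rightarrow> (nat \<Rightarrow> 'e list) \<Rightarrow> 'e \<Rightarrow> nat \<Rightarrow> 'e" where
  "Fmax G1 G2 P e i = P i ! max (first_reach G1 P e i) (first_reach G2 P e i)"

definition Smax :: "'e set \<Rightarrow> nat \<Rightarrow> (nat \<Rightarrow> 'e list) \<Rightarrow> 'e rel \<Rightarrow> 'e rel \<Rightarrow> 'e rel" where
  "Smax E n P G1 G2 =
     {(P i ! k, P i ! Suc k) | i k. i < n \<and> Suc k < length (P i)}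
     \<union> {(e, Fmax G1 G2 P e i) | e i. e \<in> E \<and> i < n}"

end

theory Submission
  imports Defs
begin

lemma cut_closed:
  assumes "C \<in> cuts V G" "(x,y) \<in> G\<^sup>*" "y \<in> C" shows "x \<in> C"
  using assms(2,3)
proof (induction rule: converse_rtrancl_induct)
  case base then show ?case .
next
  case (step x z)
  then show ?case using assms(1) unfolding cuts_def by blast
qed

lemma fin_Inter_in:
  assumes "finite F" "F \<noteq> {}" "F \<subseteq> L" "\<forall>A\<in>L. \<forall>B\<in>L. A \<inter> B \<in> L \<and> A \<union> B \<in> L"
  shows "\<Inter>F \<in> L"
  using assms
proof (induction F rule: finite_ne_induct)
  case (singleton x) then show ?case by simp
next
  case (insert x F) then show ?case by simp
qed

lemma fin_Union_in:
  assumes "finite F" "F \<subseteq> L" "{} \<in> L" "\<forall>A\<in>L. \<forall>B\<in>L. A \<inter> B \<in> L \<and> A \<union> B \<in> L"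
  shows "\<Union>F \<in> L"
  using assms
proof (induction F rule: finite_induct)
  case empty then show ?case by simp
next
  case (insert x F) then show ?case by simp
qed

lemma birkhoff:
  assumes fin: "finite V" and e: "{} \<in> L" and v: "V \<in> L" and LP: "L \<subseteq> Pow V"
    and cl: "\<forall>A\<in>L. \<forall>B\<in>L. A \<inter> B \<in> L \<and> A \<union> B \<in> L"
  shows "cuts V {(u,v). u\<in>V \<and> v\<in>V \<and> (\<forall>C\<in>L. v\<in>C \<longrightarrow> u\<in>C)} = L"
    (is "cuts V ?H = L")
proof
  show "L \<subseteq> cuts V ?H" using LP unfolding cuts_def by auto
next
  show "cuts V ?H \<subseteq> L"
  proof
    fix C assume C: "C \<in> cuts V ?H"
    hence CV: "C \<subseteq> V" unfolding cuts_def by auto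
    define D where "D = (\<lambda>x. \<Inter>{A\<in>L. x \<in> A})"
    have finL: "finite L" using LP fin by (meson finite_Pow_iff finite_subset)
    have DL: "D x \<in> L" if "x \<in> V" for x
      unfolding D_def
      by (rule fin_Inter_in) (use finL that v cl in auto)
    have "C = \<Union>(D ` C)"
    proof
      show "C \<subseteq> \<Union>(D ` C)" unfolding D_def by auto
    next
      show "\<Union>(D ` C) \<subseteq> C"
      proof
        fix u assume "u \<in> \<Union>(D ` C)"
        then obtain x where x: "x \<in> C" "u \<in> D x" by auto
        have "x \<in> V" using x CV by auto
        hence uV: "u \<in> V" using x v unfolding D_def by blast
        have "(u,x) \<in> ?H" using x uV CV unfolding D_def by auto
        then show "u \<in> C" using C x(1) unfolding cuts_def by blast
      qed
    qed
    moreover have "\<Union>(D ` C) \<in> L"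
      by (rule fin_Union_in) (use DL CV fin e cl finite_subset[OF CV fin] in auto)
    ultimately show "C \<in> L" by metis
  qed
qed

lemma slice_cuts:
  assumes fin: "finite E" and RE: "R \<subseteq> E \<times> E" and regc: "regular E R n P c"
    and sl: "is_slice E R n P c G"
  shows "cuts E G = {C. ntcc E R n P C \<and> c C} \<union> {{}, E}"
proof -
  define L where "L = {C. ntcc E R n P C \<and> c C} \<union> {{}, E}"
  have subE: "\<And>A. ntcc E R n P A \<Longrightarrow> A \<subseteq> E" unfolding ntcc_def cuts_def by auto
  have ncl: "\<And>A B. ntcc E R n P A \<Longrightarrow> ntcc E R n P B \<Longrightarrow>
      ntcc E R n P (A \<inter> B) \<and> ntcc E R n P (A \<union> B)"
    unfolding ntcc_def cuts_def by blast
  have LP: "L \<subseteq> Pow E" unfolding L_def using subE by auto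
  have Lcases: "\<And>A. A \<in> L \<Longrightarrow> (ntcc E R n P A \<and> c A) \<or> A = {} \<or> A = E"
    unfolding L_def by auto
  have Lcl: "\<forall>A\<in>L. \<forall>B\<in>L. A \<inter> B \<in> L \<and> A \<union> B \<in> L"
  proof (intro ballI)
    fix A B assume A: "A \<in> L" and B: "B \<in> L"
    have AE: "A \<subseteq> E" "B \<subseteq> E" using A B LP by auto
    consider "A = {}" | "A = E" | "B = {}" | "B = E" | "ntcc E R n P A \<and> c A" "ntcc E R n P B \<and> c B"
      using Lcases A B by blast
    then show "A \<inter> B \<in> L \<and> A \<union> B \<in> L"
    proof cases
      case 1
      then have "A \<inter> B = A" "A \<union> B = B" by auto
      then show ?thesis using A B by simp
    next
      case 2
      then have "A \<inter> B = B" "A \<union> B = A" using AE by auto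
      then show ?thesis using A B by simp
    next
      case 3
      then have "A \<inter> B = B" "A \<union> B = A" by auto
      then show ?thesis using A B by simp
    next
      case 4
      then have "A \<inter> B = A" "A \<union> B = B" using AE by auto
      then show ?thesis using A B by simp
    next
      case 5
      then have "ntcc E R n P (A \<inter> B) \<and> c (A \<inter> B)" "ntcc E R n P (A \<union> B) \<and> c (A \<union> B)"
        using ncl regc unfolding regular_def by blast+
      then show ?thesis unfolding L_def by blast
    qed
  qed
  define H where "H = {(u,v). u\<in>E \<and> v\<in>E \<and> (\<forall>C\<in>L. v\<in>C \<longrightarrow> u\<in>C)}"
  have cH: "cuts E H = L" unfolding H_def
    by (rule birkhoff[OF fin]) (use LP Lcl in \<open>auto simp: L_def\<close>)
  have HE: "H \<subseteq> E \<times> E" unfolding H_def by auto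
  have "{C. ntcc E R n P C \<and> c C} \<subseteq> cuts E H" using cH L_def by auto
  hence le: "card (cuts E G) \<le> card L" using sl HE cH unfolding is_slice_def by metis
  have GE: "G \<subseteq> E \<times> E" using sl unfolding is_slice_def by auto
  have sub: "L \<subseteq> cuts E G" using sl GE unfolding L_def is_slice_def cuts_def by auto
  have fin2: "finite (cuts E G)"
    by (rule finite_subset[of _ "Pow E"]) (use fin in \<open>auto simp: cuts_def\<close>)
  have "L = cuts E G"
    using card_subset_eq[OF fin2 sub] le card_mono[OF fin2 sub] by linarith
  then show ?thesis unfolding L_def by simp
qed

lemma reg_regular: "regular E R n P (reg E R n P c)"
  unfolding regular_def
proof (intro allI impI conjI)
  fix C1 C2
  assume a: "ntcc E R n P C1 \<and> ntcc E R n P C2 \<and> reg E R n P c C1 \<and> reg E R n P c C2"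
  show "reg E R n P c (C1 \<inter> C2)" unfolding reg_def
  proof (intro allI impI)
    fix r assume r: "regular E R n P r \<and> (\<forall>D. ntcc E R n P D \<and> c D \<longrightarrow> r D)"
    have "r C1" "r C2" using a r unfolding reg_def by blast+
    then show "r (C1 \<inter> C2)" using r a unfolding regular_def by blast
  qed
  show "reg E R n P c (C1 \<union> C2)" unfolding reg_def
  proof (intro allI impI)
    fix r assume r: "regular E R n P r \<and> (\<forall>D. ntcc E R n P D \<and> c D \<longrightarrow> r D)"
    have "r C1" "r C2" using a r unfolding reg_def by blast+
    then show "r (C1 \<union> C2)" using r a unfolding regular_def by blast
  qed
qed


lemma reach:
  assumes cG: "cuts E G1 = {C. ntcc E R n P C \<and> c C} \<union> {{},E}" and GE: "G1 \<subseteq> E \<times> E"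
    and i: "i < n" and e: "e \<in> E" and l: "last (P i) \<in> E"
  shows "(e, last (P i)) \<in> G1\<^sup>*"
proof -
  define D where "D = {u\<in>E. (u, last (P i)) \<in> G1\<^sup>*}"
  have "D \<in> cuts E G1" unfolding D_def cuts_def using GE
    by (auto intro: converse_rtrancl_into_rtrancl)
  hence DL: "D \<in> {C. ntcc E R n P C \<and> c C} \<union> {{},E}" using cG by simp
  have lD: "last (P i) \<in> D" using l D_def by auto
  have "last (P i) \<in> finals n P" using i unfolding finals_def by auto
  hence "\<not> ntcc E R n P D" using lD unfolding ntcc_def by auto
  hence "D = E" using DL lD by auto
  thus ?thesis using e D_def by auto
qed

lemma fr:
  assumes "(e, last (P i)) \<in> G\<^sup>*" "P i \<noteq> []"
  shows "first_reach G P e i < length (P i) \<and> (e, P i ! first_reach G P e i) \<in> G\<^sup>*"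
  unfolding first_reach_def
  by (rule LeastI[of _ "length (P i) - 1"]) (use assms in \<open>auto simp: last_conv_nth\<close>)

lemma fr_le: "j < length (P i) \<Longrightarrow> (e, P i ! j) \<in> G\<^sup>* \<Longrightarrow> first_reach G P e i \<le> j"
  unfolding first_reach_def by (rule Least_le) simp

lemma prefix:
  assumes "\<And>k. Suc k < length (P i) \<Longrightarrow> P i ! Suc k \<in> C \<Longrightarrow> P i ! k \<in> C"
  shows "k \<le> l \<Longrightarrow> l < length (P i) \<Longrightarrow> P i ! l \<in> C \<Longrightarrow> P i ! k \<in> C"
proof (induction l)
  case 0 thus ?case by simp
next
  case (Suc l)
  show ?case
  proof (cases "k = Suc l")
    case True thus ?thesis using Suc by simp
  next
    case False thus ?thesis using Suc assms by auto
  qed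
qed

theorem theorem15:
  fixes E :: "'e set" and R :: "'e rel" and n :: nat and P :: "nat \<Rightarrow> 'e list"
    and b1 b2 :: "'e set \<Rightarrow> bool" and G1 G2 G :: "'e rel"
  assumes "computation E R n P"
    and "regular E R n P b1" and "regular E R n P b2"
    and "is_slice E R n P b1 G1" and "is_slice E R n P b2 G2"
    and "is_slice E R n P (reg E R n P (\<lambda>C. b1 C \<or> b2 C)) G"
  shows "cuts E (Smax E n P G1 G2) = cuts E G"
proof -
  note c = assms(1)[unfolded computation_def]
  have RE: "R \<subseteq> E \<times> E" using c[THEN conjunct1] .
  have Eeq: "E = (\<Union>i<n. set (P i))" using c[THEN conjunct2, THEN conjunct1] .
  have c3: "\<forall>i<n. P i \<noteq> [] \<and> distinct (P i)" using c[THEN conjunct2, THEN conjunct2, THEN conjunct1] .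
  have ne: "\<And>i. i < n \<Longrightarrow> P i \<noteq> []" using c3 by blast
  have c5: "\<forall>i<n. \<forall>k l. k < l \<and> l < length (P i) \<longrightarrow> (P i ! k, P i ! l) \<in> R\<^sup>+"
    using c[THEN conjunct2, THEN conjunct2, THEN conjunct2, THEN conjunct2, THEN conjunct1] .
  have procR: "\<And>i k l. i < n \<Longrightarrow> k < l \<Longrightarrow> l < length (P i) \<Longrightarrow> (P i ! k, P i ! l) \<in> R\<^sup>+"
    using c5 by blast
  have setE: "\<And>i. i < n \<Longrightarrow> set (P i) \<subseteq> E"
  proof -
    fix i assume "i < n" thus "set (P i) \<subseteq> E" unfolding Eeq by blast
  qed
  have memE: "\<And>e. e \<in> E \<Longrightarrow> \<exists>i<n. e \<in> set (P i)"
  proof -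
    fix e assume "e \<in> E" hence "e \<in> (\<Union>i<n. set (P i))" by (simp only: Eeq)
    thus "\<exists>i<n. e \<in> set (P i)" by blast
  qed
  have finE: "finite E" unfolding Eeq by simp
  have hG1: "cuts E G1 = {C. ntcc E R n P C \<and> b1 C} \<union> {{}, E}"
    using slice_cuts[OF finE RE assms(2) assms(4)] .
  have hG2: "cuts E G2 = {C. ntcc E R n P C \<and> b2 C} \<union> {{}, E}"
    using slice_cuts[OF finE RE assms(3) assms(5)] .
  have hG: "cuts E G = {C. ntcc E R n P C \<and> reg E R n P (\<lambda>C. b1 C \<or> b2 C) C} \<union> {{}, E}"
    using slice_cuts[OF finE RE reg_regular assms(6)] .
  have G1E: "G1 \<subseteq> E \<times> E" using assms(4) unfolding is_slice_def by blast
  have G2E: "G2 \<subseteq> E \<times> E" using assms(5) unfolding is_slice_def by blast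
  have inE: "\<And>i k. i < n \<Longrightarrow> k < length (P i) \<Longrightarrow> P i ! k \<in> E" using setE nth_mem by blast
  have lastE: "\<And>i. i < n \<Longrightarrow> last (P i) \<in> E" using setE ne last_in_set by blast
  have R_pre: "\<And>C i k. C \<in> cuts E R \<Longrightarrow> i < n \<Longrightarrow> Suc k < length (P i) \<Longrightarrow> P i ! Suc k \<in> C \<Longrightarrow> P i ! k \<in> C"
    using procR cut_closed trancl_into_rtrancl by (metis lessI)
  have R_pre2: "\<And>C i k l. C \<in> cuts E R \<Longrightarrow> i < n \<Longrightarrow> k \<le> l \<Longrightarrow> l < length (P i) \<Longrightarrow> P i ! l \<in> C \<Longrightarrow> P i ! k \<in> C"
  proof -
    fix C i k l assume a: "C \<in> cuts E R" "i < n" "k \<le> l" "l < length (P i)" "P i ! l \<in> C"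
    show "P i ! k \<in> C" by (rule prefix[of P i C k l]) (use a R_pre in auto)
  qed
  have G1R: "cuts E G1 \<subseteq> cuts E R"
  proof
    fix C assume "C \<in> cuts E G1"
    hence "ntcc E R n P C \<or> C = {} \<or> C = E" using hG1 by blast
    thus "C \<in> cuts E R" using RE unfolding ntcc_def cuts_def by blast
  qed
  have G2R: "cuts E G2 \<subseteq> cuts E R"
  proof
    fix C assume "C \<in> cuts E G2"
    hence "ntcc E R n P C \<or> C = {} \<or> C = E" using hG2 by blast
    thus "C \<in> cuts E R" using RE unfolding ntcc_def cuts_def by blast
  qed
  have fr1: "\<And>e i. e \<in> E \<Longrightarrow> i < n \<Longrightarrow> first_reach G1 P e i < length (P i) \<and> (e, P i ! first_reach G1 P e i) \<in> G1\<^sup>*"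
  proof -
    fix e i assume a: "e \<in> E" "i < n"
    show "first_reach G1 P e i < length (P i) \<and> (e, P i ! first_reach G1 P e i) \<in> G1\<^sup>*"
      using fr[of e P i G1, OF reach[OF hG1 G1E a(2) a(1) lastE[OF a(2)]] ne[OF a(2)]] .
  qed
  have fr2: "\<And>e i. e \<in> E \<Longrightarrow> i < n \<Longrightarrow> first_reach G2 P e i < length (P i) \<and> (e, P i ! first_reach G2 P e i) \<in> G2\<^sup>*"
  proof -
    fix e i assume a: "e \<in> E" "i < n"
    show "first_reach G2 P e i < length (P i) \<and> (e, P i ! first_reach G2 P e i) \<in> G2\<^sup>*"
      using fr[of e P i G2, OF reach[OF hG2 G2E a(2) a(1) lastE[OF a(2)]] ne[OF a(2)]] .
  qed
  have SE: "Smax E n P G1 G2 \<subseteq> E \<times> E"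
  proof
    fix x assume "x \<in> Smax E n P G1 G2"
    then consider (a) i k where "x = (P i ! k, P i ! Suc k)" "i < n" "Suc k < length (P i)"
      | (b) e i where "x = (e, Fmax G1 G2 P e i)" "e \<in> E" "i < n"
      unfolding Smax_def by blast
    then show "x \<in> E \<times> E"
    proof cases
      case a then show ?thesis using inE by auto
    next
      case b
      have "max (first_reach G1 P e i) (first_reach G2 P e i) < length (P i)"
        using fr1[OF b(2,3)] fr2[OF b(2,3)] by simp
      then show ?thesis using b inE unfolding Fmax_def by auto
    qed
  qed
  define K where "K = cuts E (Smax E n P G1 G2)"
  have K_succ: "\<And>C i k. C \<in> K \<Longrightarrow> i < n \<Longrightarrow> Suc k < length (P i) \<Longrightarrow> P i ! Suc k \<in> C \<Longrightarrow> P i ! k \<in> C"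
  proof -
    fix C i k assume a: "C \<in> K" "i < n" "Suc k < length (P i)" "P i ! Suc k \<in> C"
    have "(P i ! k, P i ! Suc k) \<in> Smax E n P G1 G2" unfolding Smax_def using a by blast
    then show "P i ! k \<in> C" using a unfolding K_def cuts_def by blast
  qed
  have K_pre: "\<And>C i k l. C \<in> K \<Longrightarrow> i < n \<Longrightarrow> k \<le> l \<Longrightarrow> l < length (P i) \<Longrightarrow> P i ! l \<in> C \<Longrightarrow> P i ! k \<in> C"
  proof -
    fix C i k l assume a: "C \<in> K" "i < n" "k \<le> l" "l < length (P i)" "P i ! l \<in> C"
    show "P i ! k \<in> C" by (rule prefix[of P i C k l]) (use a K_succ in auto)
  qed
  have KF: "\<And>C e i. C \<in> K \<Longrightarrow> e \<in> E \<Longrightarrow> i < n \<Longrightarrow> Fmax G1 G2 P e i \<in> C \<Longrightarrow> e \<in> C"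
  proof -
    fix C e i assume a: "C \<in> K" "e \<in> E" "i < n" "Fmax G1 G2 P e i \<in> C"
    have "(e, Fmax G1 G2 P e i) \<in> Smax E n P G1 G2" unfolding Smax_def using a by blast
    then show "e \<in> C" using a unfolding K_def cuts_def by blast
  qed
  have GK: "cuts E Gx \<subseteq> K" if Gx: "cuts E Gx \<subseteq> cuts E R"
    and frx: "\<And>e i. e \<in> E \<Longrightarrow> i < n \<Longrightarrow> (e, P i ! first_reach Gx P e i) \<in> Gx\<^sup>*"
    and frmax: "\<And>e i. e \<in> E \<Longrightarrow> i < n \<Longrightarrow> first_reach Gx P e i \<le> max (first_reach G1 P e i) (first_reach G2 P e i)"
    for Gx
  proof
    fix C assume C: "C \<in> cuts E Gx"
    have CR: "C \<in> cuts E R" using C Gx by auto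
    have CE: "C \<subseteq> E" using C unfolding cuts_def by auto
    show "C \<in> K" unfolding K_def cuts_def
    proof (intro CollectI conjI CE ballI)
      fix x assume "x \<in> Smax E n P G1 G2"
      then consider (a) i k where "x = (P i ! k, P i ! Suc k)" "i < n" "Suc k < length (P i)"
        | (b) e i where "x = (e, Fmax G1 G2 P e i)" "e \<in> E" "i < n"
        unfolding Smax_def by blast
      then show "case x of (u, v) \<Rightarrow> v \<in> C \<longrightarrow> u \<in> C"
      proof cases
        case a then show ?thesis using R_pre[OF CR] by auto
      next
        case b
        have m: "max (first_reach G1 P e i) (first_reach G2 P e i) < length (P i)"
          using fr1[OF b(2,3)] fr2[OF b(2,3)] by simp
        show ?thesis
        proof (simp add: b(1), intro impI)
          assume "Fmax G1 G2 P e i \<in> C"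
          hence "P i ! first_reach Gx P e i \<in> C"
            using R_pre2[OF CR b(3) frmax[OF b(2,3)] m] unfolding Fmax_def by blast
          then show "e \<in> C" using cut_closed[OF C frx[OF b(2,3)]] by blast
        qed
      qed
    qed
  qed
  have G1K: "cuts E G1 \<subseteq> K" by (rule GK[OF G1R]) (use fr1 in auto)
  have G2K: "cuts E G2 \<subseteq> K" by (rule GK[OF G2R]) (use fr2 in auto)
  have Kcl: "\<And>A B. A \<in> K \<Longrightarrow> B \<in> K \<Longrightarrow> A \<inter> B \<in> K \<and> A \<union> B \<in> K"
    unfolding K_def cuts_def by blast
  have Gcl: "\<forall>A\<in>cuts E G. \<forall>B\<in>cuts E G. A \<inter> B \<in> cuts E G \<and> A \<union> B \<in> cuts E G"
    unfolding cuts_def by blast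
  have regI: "reg E R n P (\<lambda>C. b1 C \<or> b2 C) D" if "b1 D \<or> b2 D" "ntcc E R n P D" for D
    using that unfolding reg_def by blast
  have G1G: "cuts E G1 \<subseteq> cuts E G" using hG1 hG regI by auto
  have G2G: "cuts E G2 \<subseteq> cuts E G" using hG2 hG regI by auto
  have "K = cuts E G"
  proof
    show "cuts E G \<subseteq> K"
    proof
      fix C assume C: "C \<in> cuts E G"
      then consider "C = {}" | "C = E" | "ntcc E R n P C" "reg E R n P (\<lambda>C. b1 C \<or> b2 C) C"
        using hG by auto
      then show "C \<in> K"
      proof cases
        case 1 then show ?thesis unfolding K_def cuts_def by auto
      next
        case 2 then show ?thesis using SE unfolding K_def cuts_def by auto
      next
        case 3
        have rr: "regular E R n P (\<lambda>C. C \<in> K)" unfolding regular_def using Kcl by blast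
        have "\<forall>D. ntcc E R n P D \<and> (b1 D \<or> b2 D) \<longrightarrow> D \<in> K"
          using hG1 hG2 G1K G2K by blast
        then show ?thesis using 3(2) rr unfolding reg_def by blast
      qed
    qed
  next
    show "K \<subseteq> cuts E G"
    proof
      fix C assume C: "C \<in> K"
      have CE: "C \<subseteq> E" using C unfolding K_def cuts_def by auto
      define A where "A = (\<lambda>e. {u\<in>E. (u,e) \<in> G1\<^sup>*})"
      define B where "B = (\<lambda>e. {u\<in>E. (u,e) \<in> G2\<^sup>*})"
      have A1: "A e \<in> cuts E G1" for e unfolding A_def cuts_def using G1E
        by (auto intro: converse_rtrancl_into_rtrancl)
      have B1: "B e \<in> cuts E G2" for e unfolding B_def cuts_def using G2E
        by (auto intro: converse_rtrancl_into_rtrancl)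
      have ABG: "A e \<inter> B e \<in> cuts E G" for e using A1 B1 G1G G2G Gcl by blast
      have "C = \<Union>((\<lambda>e. A e \<inter> B e) ` C)"
      proof
        show "C \<subseteq> \<Union>((\<lambda>e. A e \<inter> B e) ` C)" using CE unfolding A_def B_def by auto
      next
        show "\<Union>((\<lambda>e. A e \<inter> B e) ` C) \<subseteq> C"
        proof
          fix u assume "u \<in> \<Union>((\<lambda>e. A e \<inter> B e) ` C)"
          then obtain e where e: "e \<in> C" "u \<in> A e" "u \<in> B e" by auto
          have uE: "u \<in> E" using e(2) unfolding A_def by auto
          have "e \<in> E" using e CE by auto
          then obtain i j where ij: "i < n" "j < length (P i)" "e = P i ! j"
            using memE[of e] by (auto simp: in_set_conv_nth)
          have "first_reach G1 P u i \<le> j" using fr_le[of j P i u G1, OF ij(2)] e(2) ij(3) unfolding A_def by auto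
          moreover have "first_reach G2 P u i \<le> j" using fr_le[of j P i u G2, OF ij(2)] e(3) ij(3) unfolding B_def by auto
          ultimately have "Fmax G1 G2 P u i \<in> C"
            unfolding Fmax_def using K_pre[OF C ij(1) _ ij(2)] e(1) ij(3) by auto
          then show "u \<in> C" using KF[OF C uE ij(1)] by blast
        qed
      qed
      moreover have "\<Union>((\<lambda>e. A e \<inter> B e) ` C) \<in> cuts E G"
      proof -
        have f1: "finite ((\<lambda>e. A e \<inter> B e) ` C)" using finite_subset[OF CE finE] by (rule finite_imageI)
        have f2: "(\<lambda>e. A e \<inter> B e) ` C \<subseteq> cuts E G" using ABG by blast
        have f3: "{} \<in> cuts E G" by (simp add: cuts_def)
        show ?thesis by (rule fin_Union_in[OF f1 f2 f3 Gcl])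
      qed
      ultimately show "C \<in> cuts E G" by metis
    qed
  qed
  then show ?thesis unfolding K_def .
qed

end
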